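(* Let $x,y \in \mathcal{G}$. We have that \begin{align*} \eta_x^2 = \eta_x\sigma(x,x^{-1}), & \text{ } n_x^2 = n_x, \\ \eta_x = 0 \iff \sigma(x,x^{-1}) = 0 \iff & \Gamma(x) = 0 \iff n_x = 0, \\ r(x) = r(y) \implies (\eta_x\eta_y = 0 & \iff \eta_y\eta_x = 0 \iff n_xn_y = 0), \\ d(x) = r(y) \implies \Gamma(x)n_y & = n_{xy}\Gamma(x), \\ r(x) = r(y) \implies n_xn_y & = n_yn_x. \end{align*}
   Context: Let $\mathbb{K}$ be a field and $\mathbb{K}^*$ its multiplicative group. Let $\mathcal{G}$ be a groupoid (a set with a partially defined associative product in which each $g$ has domain $d(g)=g^{-1}g$, range $r(g)=gg^{-1}$ and inverse $g^{-1}$; $\exists gh$ iff $d(g)=r(h)$). A $\mathbb{K}$-semigroup is a semigroup $S$ with $0$ together with a map $\mathbb{K}\times S\to S$ such that $\alpha(\beta x)=(\alpha\beta)x$, $1_\mathbb{K}x=x$, $\alpha(xy)=(\alpha x)y=x(\alpha y)$ and $0_\mathbb{K}x = x0_\mathbb{K}=0_S$; it is $\mathbb{K}$-cancellative if moreover $\alpha x=\beta x$ with $0\neq x$ implies $\alpha=\beta$. Let $S$ be a $\mathbb{K}$-cancellative semigroup and $\Gamma:\mathcal{G}\to S$ a partial projective representation of $\mathcal{G}$, i.e. the composition of $\Gamma$ with the projection $S\to S/\lambda$ (where $x\lambda y$ iff $x=\alpha y$ for some $\alpha\in\mathbb{K}^*$) is a partial homomorphism: if $\exists xy$ then $\exists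 \varphi(x)\varphi(y)$ and $\varphi(x^{-1})\varphi(x)\varphi(y)=\varphi(x^{-1})\varphi(xy)$, $\varphi(x)\varphi(y)\varphi(y^{-1})=\varphi(xy)\varphi(y^{-1})$. Let $\sigma:\mathcal{G}\times\mathcal{G}\to\mathbb{K}$ be the factor set associated with $\Gamma$: on $\{(x,y)\in\mathcal{G}^2 : \Gamma(x)\Gamma(y)\neq 0\}$ it is the unique $\mathbb{K}^*$-valued map with $\Gamma(x^{-1})\Gamma(x)\Gamma(y) = \Gamma(x^{-1})\Gamma(xy)\sigma(x,y)$ and $\Gamma(x)\Gamma(y)\Gamma(y^{-1}) = \Gamma(xy)\Gamma(y^{-1})\sigma(x,y)$, and it is set equal to $0$ elsewhere. Assume that $\Gamma(r(x))$ and $\Gamma(d(x))$ are left and right identities to $\Gamma(x)$, respectively, for all $x\in\mathcal{G}$. Then $\sigma(x,x^{-1}) = \sigma(x^{-1},x)$ for all $x$. Write $\eta_x = \Gamma(x)\Gamma(x^{-1})$ and define $n_x = \eta_x\sigma(x^{-1},x)^{-1}$ if $\Gamma(x)\neq 0$, and $n_x=0$ if $\Gamma(x)=0$. *)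

theory Defs
  imports Main
begin

definition gdom :: "('g \<Rightarrow> 'g \<Rightarrow> 'g) \<Rightarrow> ('g \<Rightarrow> 'g) \<Rightarrow> 'g \<Rightarrow> 'g" where
  "gdom m i x = m (i x) x"

definition gran :: "('g \<Rightarrow> 'g \<Rightarrow> 'g) \<Rightarrow> ('g \<Rightarrow> 'g) \<Rightarrow> 'g \<Rightarrow> 'g" where
  "gran m i x = m x (i x)"

text \<open>The product m x y is meaningful exactly when gdom x = gran y.\<close>
definition groupoid :: "('g \<Rightarrow> 'g \<Rightarrow> 'g) \<Rightarrow> ('g \<Rightarrow> 'g) \<Rightarrow> bool" where
  "groupoid m i \<longleftrightarrow>
     (\<forall>x. i (i x) = x) \<and>
     (\<forall>x y. gdom m i x = gran m i y \<longrightarrow>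
         gdom m i (m x y) = gdom m i y \<and> gran m i (m x y) = gran m i x) \<and>
     (\<forall>x y z. gdom m i x = gran m i y \<and> gdom m i y = gran m i z \<longrightarrow>
         m (m x y) z = m x (m y z)) \<and>
     (\<forall>x y. gdom m i x = gran m i y \<longrightarrow>
         m (i x) (m x y) = y \<and> m (m x y) (i y) = x) \<and>
     (\<forall>x. m (gran m i x) x = x \<and> m x (gdom m i x) = x)"

definition K_semigroup :: "('k::field \<Rightarrow> 's::{semigroup_mult,mult_zero} \<Rightarrow> 's) \<Rightarrow> bool" where
  "K_semigroup act \<longleftrightarrow>
     (\<forall>a b x. act a (act b x) = act (a * b) x) \<and>
     (\<forall>x. act 1 x = x) \<and>
     (\<forall>a x y. act a (x * y) = act a x * y \<and> act a (x * y) = x * act a y) \<and>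
     (\<forall>x. act 0 x = 0)"

definition K_cancellative :: "('k::field \<Rightarrow> 's::{semigroup_mult,mult_zero} \<Rightarrow> 's) \<Rightarrow> bool" where
  "K_cancellative act \<longleftrightarrow> K_semigroup act \<and>
     (\<forall>a b x. x \<noteq> 0 \<and> act a x = act b x \<longrightarrow> a = b)"

text \<open>The relation lambda: x lambda y iff x = alpha y for some nonzero alpha;
  equality in S/lambda of the classes of a and b.\<close>
definition lam :: "('k::field \<Rightarrow> 's \<Rightarrow> 's) \<Rightarrow> 's \<Rightarrow> 's \<Rightarrow> bool" where
  "lam act a b \<longleftrightarrow> (\<exists>\<alpha>. \<alpha> \<noteq> 0 \<and> a = act \<alpha> b)"

definition partial_proj_rep ::
  "('g \<Rightarrow> 'g \<Rightarrow> 'g) \<Rightarrow> ('g \<Rightarrow> 'g) \<Rightarrow> ('k::field \<Rightarrow> 's::{semigroup_mult,mult_zero} \<Rightarrow> 's)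
     \<Rightarrow> ('g \<Rightarrow> 's) \<Rightarrow> bool" where
  "partial_proj_rep m i act \<Gamma> \<longleftrightarrow>
     (\<forall>x y. gdom m i x = gran m i y \<longrightarrow>
        lam act (\<Gamma> (i x) * \<Gamma> x * \<Gamma> y) (\<Gamma> (i x) * \<Gamma> (m x y)) \<and>
        lam act (\<Gamma> x * \<Gamma> y * \<Gamma> (i y)) (\<Gamma> (m x y) * \<Gamma> (i y)))"

definition factor_set ::
  "('g \<Rightarrow> 'g \<Rightarrow> 'g) \<Rightarrow> ('g \<Rightarrow> 'g) \<Rightarrow> ('k::field \<Rightarrow> 's::{semigroup_mult,mult_zero} \<Rightarrow> 's)
     \<Rightarrow> ('g \<Rightarrow> 's) \<Rightarrow> ('g \<Rightarrow> 'g \<Rightarrow> 'k) \<Rightarrow> bool" where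
  "factor_set m i act \<Gamma> \<sigma> \<longleftrightarrow>
     (\<forall>x y. (gdom m i x = gran m i y \<and> \<Gamma> x * \<Gamma> y \<noteq> 0 \<longrightarrow>
          \<sigma> x y \<noteq> 0 \<and>
          \<Gamma> (i x) * \<Gamma> x * \<Gamma> y = act (\<sigma> x y) (\<Gamma> (i x) * \<Gamma> (m x y)) \<and>
          \<Gamma> x * \<Gamma> y * \<Gamma> (i y) = act (\<sigma> x y) (\<Gamma> (m x y) * \<Gamma> (i y))) \<and>
        (\<not> (gdom m i x = gran m i y \<and> \<Gamma> x * \<Gamma> y \<noteq> 0) \<longrightarrow> \<sigma> x y = 0))"

definition eta :: "('g \<Rightarrow> 'g) \<Rightarrow> ('g \<Rightarrow> 's::semigroup_mult) \<Rightarrow> 'g \<Rightarrow> 's" where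
  "eta i \<Gamma> x = \<Gamma> x * \<Gamma> (i x)"

definition nn :: "('g \<Rightarrow> 'g) \<Rightarrow> ('k::field \<Rightarrow> 's::{semigroup_mult,mult_zero} \<Rightarrow> 's)
     \<Rightarrow> ('g \<Rightarrow> 's) \<Rightarrow> ('g \<Rightarrow> 'g \<Rightarrow> 'k) \<Rightarrow> 'g \<Rightarrow> 's" where
  "nn i act \<Gamma> \<sigma> x = (if \<Gamma> x \<noteq> 0 then act (inverse (\<sigma> (i x) x)) (eta i \<Gamma> x) else 0)"

end

theory Submission
  imports Defs
begin

locale setting =
  fixes m :: "'g \<Rightarrow> 'g \<Rightarrow> 'g" and i :: "'g \<Rightarrow> 'g"
    and act :: "'k::field \<Rightarrow> 's::{semigroup_mult,mult_zero} \<Rightarrow> 's"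
    and G :: "'g \<Rightarrow> 's" and \<sigma> :: "'g \<Rightarrow> 'g \<Rightarrow> 'k"
  assumes grp: "groupoid m i"
    and kc: "K_cancellative act"
    and ppr: "partial_proj_rep m i act G"
    and fs: "factor_set m i act G \<sigma>"
    and lid: "\<And>z. G (gran m i z) * G z = G z"
    and rid: "\<And>z. G z * G (gdom m i z) = G z"
begin

abbreviation "dm \<equiv> gdom m i"
abbreviation "rn \<equiv> gran m i"

lemma g_ii[simp]: "i (i x) = x" using grp unfolding groupoid_def by blast
lemma g_dom_inv[simp]: "dm (i x) = rn x" by (simp add: gdom_def gran_def)
lemma g_ran_inv[simp]: "rn (i x) = dm x" by (simp add: gdom_def gran_def)
lemma g_mul: "dm x = rn y \<Longrightarrow> dm (m x y) = dm y \<and> rn (m x y) = rn x"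
  using grp unfolding groupoid_def by blast
lemma g_assoc: "dm x = rn y \<Longrightarrow> dm y = rn z \<Longrightarrow> m (m x y) z = m x (m y z)"
  using grp unfolding groupoid_def by blast
lemma g_canc: "dm x = rn y \<Longrightarrow> m (i x) (m x y) = y \<and> m (m x y) (i y) = x"
  using grp unfolding groupoid_def by blast
lemma g_id: "m (rn x) x = x" "m x (dm x) = x"
  using grp unfolding groupoid_def by blast+
lemma g_xix: "m x (i x) = rn x" by (simp add: gran_def)
lemma g_ixx: "m (i x) x = dm x" by (simp add: gdom_def)

lemma g_inv_prod: assumes c: "dm x = rn y" shows "i (m x y) = m (i y) (i x)"
proof -
  define p where "p = m x y"
  define q where "q = m (i y) (i x)"
  have cq: "dm (i y) = rn (i x)" using c by simp
  have rq: "rn q = dm y" using g_mul[OF cq] unfolding q_def by simp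
  have dp: "dm p = dm y" "rn p = rn x" using g_mul[OF c] unfolding p_def by auto
  have "m y q = m (m y (i y)) (i x)" unfolding q_def
    by (rule g_assoc[symmetric]) (use c in auto)
  also have "\<dots> = i x" using c g_id(1)[of "i x"] by (simp add: g_xix)
  finally have yq: "m y q = i x" .
  have "m p q = m x (m y q)" unfolding p_def by (rule g_assoc) (use c rq in auto)
  hence pq: "m p q = rn p" using yq dp by (simp add: g_xix)
  have "m (i p) (m p q) = q" using g_canc[of p q] dp rq by simp
  hence "q = m (i p) (dm (i p))" using pq by simp
  thus ?thesis using g_id(2)[of "i p"] unfolding p_def q_def by simp
qed

lemma a_assoc: "act a (act b x) = act (a * b) x" using kc unfolding K_cancellative_def K_semigroup_def by blast
lemma a_one: "act 1 x = x" using kc unfolding K_cancellative_def K_semigroup_def by blast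
lemma a_mL: "act a (x * y) = act a x * y" using kc unfolding K_cancellative_def K_semigroup_def by blast
lemma a_mR: "act a (x * y) = x * act a y" using kc unfolding K_cancellative_def K_semigroup_def by blast
lemma a_zero: "act 0 x = 0" using kc unfolding K_cancellative_def K_semigroup_def by blast
lemma a_canc: "x \<noteq> 0 \<Longrightarrow> act a x = act b x \<Longrightarrow> a = b" using kc unfolding K_cancellative_def by blast
lemma a_zero2: "act a 0 = 0"
proof -
  have "act a (0 * 0) = act a 0 * 0" by (rule a_mL)
  thus ?thesis by simp
qed
lemma a_prod: "act a x * act b y = act (a * b) (x * y)"
  by (metis a_assoc a_mL a_mR mult.commute)
lemma a_inv: "a \<noteq> 0 \<Longrightarrow> act (inverse a) (act a x) = x"
  by (simp add: a_assoc a_one)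
lemma a_nz: "a \<noteq> 0 \<Longrightarrow> act a x = 0 \<Longrightarrow> x = 0"
  by (metis a_inv a_zero2)

lemma lam_refl: "lam act u u" unfolding lam_def using a_one by (metis one_neq_zero)
lemma lam_sym: "lam act u v \<Longrightarrow> lam act v u" unfolding lam_def
  by (metis a_inv inverse_nonzero_iff_nonzero)
lemma lam_trans: "lam act u v \<Longrightarrow> lam act v w \<Longrightarrow> lam act u w" unfolding lam_def
  by (metis a_assoc mult_eq_0_iff)
lemma lam_zero: "lam act u v \<Longrightarrow> (u = 0 \<longleftrightarrow> v = 0)" unfolding lam_def
  by (metis a_nz a_zero2)
lemma lam_mL: "lam act u v \<Longrightarrow> lam act (w * u) (w * v)" unfolding lam_def
  by (metis a_mR)
lemma lam_mR: "lam act u v \<Longrightarrow> lam act (u * w) (v * w)" unfolding lam_def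
  by (metis a_mL)

lemma pp1: "dm x = rn y \<Longrightarrow> lam act (G (i x) * G x * G y) (G (i x) * G (m x y))"
  using ppr unfolding partial_proj_rep_def by blast
lemma pp2: "dm x = rn y \<Longrightarrow> lam act (G x * G y * G (i y)) (G (m x y) * G (i y))"
  using ppr unfolding partial_proj_rep_def by blast
lemma fs1: "dm x = rn y \<Longrightarrow> G x * G y \<noteq> 0 \<Longrightarrow> \<sigma> x y \<noteq> 0 \<and>
          G (i x) * G x * G y = act (\<sigma> x y) (G (i x) * G (m x y)) \<and>
          G x * G y * G (i y) = act (\<sigma> x y) (G (m x y) * G (i y))"
  using fs unfolding factor_set_def by blast
lemma fs0: "\<not> (dm x = rn y \<and> G x * G y \<noteq> 0) \<Longrightarrow> \<sigma> x y = 0"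
  using fs unfolding factor_set_def by blast

lemma R: "lam act (G z * G (i z) * G z) (G z)"
  using pp2[of z "i z"] by (simp add: g_xix lid)

lemma nzx: "G x \<noteq> 0 \<Longrightarrow> G x * G (i x) \<noteq> 0"
  using R[of x] lam_zero by fastforce
lemma nzi: "G x \<noteq> 0 \<Longrightarrow> G (i x) \<noteq> 0"
  using nzx by fastforce
lemma eta_zero: "eta i G x = 0 \<longleftrightarrow> G x = 0"
  unfolding eta_def using nzx by fastforce

lemma sig_zero: "\<sigma> x (i x) = 0 \<longleftrightarrow> G x = 0"
  using fs1[of x "i x"] fs0[of x "i x"] nzx by fastforce

lemma eta_sq: "eta i G x * eta i G x = act (\<sigma> x (i x)) (eta i G x)"
proof (cases "G x = 0")
  case True thus ?thesis by (simp add: eta_def a_zero2)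
next
  case False
  have "G x * G (i x) * G x = act (\<sigma> x (i x)) (G x)"
    using fs1[of x "i x"] nzx[OF False] by (simp add: g_xix lid)
  hence "G x * G (i x) * G x * G (i x) = act (\<sigma> x (i x)) (G x * G (i x))"
    by (simp add: a_mL)
  thus ?thesis by (simp add: eta_def mult.assoc)
qed

lemma sig_sym: "\<sigma> x (i x) = \<sigma> (i x) x"
proof (cases "G x = 0")
  case True
  hence "G (i x) = 0" using nzi[of "i x"] by auto
  thus ?thesis using True sig_zero[of x] sig_zero[of "i x"] by simp
next
  case False
  have a: "G x * G (i x) * G x = act (\<sigma> x (i x)) (G x)"
    using fs1[of x "i x"] nzx[OF False] by (simp add: g_xix lid)
  have "G (i x) * G x \<noteq> 0" using nzx[OF nzi[OF False]] by simp
  hence b: "G x * G (i x) * G x = act (\<sigma> (i x) x) (G x)"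
    using fs1[of "i x" x] by (simp add: g_ixx rid)
  show ?thesis using a b a_canc False by metis
qed

lemma nn_eq: "nn i act G \<sigma> x = act (inverse (\<sigma> (i x) x)) (eta i G x)"
  unfolding nn_def using eta_zero[of x] by (auto simp: a_zero2)

lemma nn_idem: "nn i act G \<sigma> x * nn i act G \<sigma> x = nn i act G \<sigma> x"
proof -
  let ?s = "\<sigma> (i x) x"
  have "nn i act G \<sigma> x * nn i act G \<sigma> x = act (inverse ?s * inverse ?s) (eta i G x * eta i G x)"
    by (simp add: nn_eq a_prod)
  also have "\<dots> = act (inverse ?s * inverse ?s * ?s) (eta i G x)"
    by (simp add: eta_sq sig_sym a_assoc)
  also have "inverse ?s * inverse ?s * ?s = inverse ?s"
    by (cases "?s = 0") (auto simp: field_simps)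
  finally show ?thesis by (simp add: nn_eq)
qed

lemma nn_zero: "nn i act G \<sigma> x = 0 \<longleftrightarrow> G x = 0"
proof
  assume h: "nn i act G \<sigma> x = 0"
  show "G x = 0"
  proof (rule ccontr)
    assume g: "G x \<noteq> 0"
    have "\<sigma> (i x) x \<noteq> 0" using sig_zero[of x] sig_sym[of x] g by simp
    hence "eta i G x = 0" using h a_nz[of "inverse (\<sigma> (i x) x)"] by (simp add: nn_eq)
    thus False using eta_zero g by simp
  qed
qed (simp add: nn_def)

lemma AL: assumes "e * e = e" "f * f = f" "a * e = act \<beta> (f * a)" "\<beta> \<noteq> 0"
  shows "a * e = f * a"
proof -
  have "a * e = a * e * e" using assms(1) by (simp add: mult.assoc)
  also have "\<dots> = act \<beta> (f * (a * e))" using assms(3) by (simp add: a_mL mult.assoc)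
  also have "\<dots> = act (\<beta> * \<beta>) (f * f * a)" using assms(3) by (simp add: a_mR a_assoc mult.assoc)
  finally have x: "act \<beta> (f * a) = act (\<beta> * \<beta>) (f * a)" using assms(2,3) by simp
  show ?thesis
  proof (cases "f * a = 0")
    case True thus ?thesis using assms(3) by (simp add: a_zero2)
  next
    case False
    hence "\<beta> = \<beta> * \<beta>" using a_canc x by blast
    hence "\<beta> = 1" using assms(4) by (metis mult_cancel_left1)
    thus ?thesis using assms(3) by (simp add: a_one)
  qed
qed


lemma eta_comm_lam: assumes r: "rn x = rn y"
  shows "lam act (eta i G x * eta i G y) (eta i G y * eta i G x)"
proof -
  define z where "z = m (i x) y"
  have cz: "dm (i x) = rn y" using r by simp
  have dz: "dm z = dm y" "rn z = dm x" using g_mul[OF cz] unfolding z_def by auto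
  have iz: "i z = m (i y) x" unfolding z_def using g_inv_prod[OF cz] by simp
  have xz: "m x z = y" unfolding z_def using g_canc[OF cz] by simp
  have zy: "m z (i y) = i x" unfolding z_def using g_canc[OF cz] by simp
  have "lam act (G x * (G (i x) * G y * G (i y))) (G x * (G z * G (i y)))"
    using lam_mL[OF pp2[OF cz]] unfolding z_def by simp
  hence s1: "lam act (eta i G x * eta i G y) (G x * G z * G (i y))"
    by (simp add: eta_def mult.assoc)
  have "lam act (G x * G z * G (i y)) (G x * (G z * G (i z) * G z) * G (i y))"
    using lam_mR[OF lam_mL[OF lam_sym[OF R[of z]]]] by simp
  hence s2: "lam act (G x * G z * G (i y)) ((G x * G z * G (i z)) * (G z * G (i y)))"
    by (simp add: mult.assoc)
  have "lam act (G x * G z * G (i z)) (G y * G (i z))"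
    using pp2[of x z] dz xz by simp
  hence s3: "lam act ((G x * G z * G (i z)) * (G z * G (i y))) (G y * (G (i z) * G z * G (i y)))"
    using lam_mR by (fastforce simp: mult.assoc)
  have "lam act (G (i z) * G z * G (i y)) (G (i z) * G (i x))"
    using pp1[of z "i y"] dz zy by simp
  hence s4: "lam act (G y * (G (i z) * G z * G (i y))) (G y * G (i z) * G (i x))"
    using lam_mL by (fastforce simp: mult.assoc)
  have cy: "dm (i y) = rn x" using r by simp
  have "lam act (G y * (G (i y) * G x * G (i x))) (G y * (G (m (i y) x) * G (i x)))"
    using lam_mL[OF pp2[OF cy]] by simp
  hence s5: "lam act (eta i G y * eta i G x) (G y * G (i z) * G (i x))"
    by (simp add: eta_def mult.assoc iz)
  show ?thesis using s1 s2 s3 s4 s5 by (meson lam_trans lam_sym)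
qed

lemma eta_conj_lam: assumes c: "dm x = rn y"
  shows "lam act (G x * eta i G y) (eta i G (m x y) * G x)"
proof -
  define p where "p = m x y"
  have dp: "dm p = dm y" "rn p = rn x" using g_mul[OF c] unfolding p_def by auto
  have s1: "lam act (G x * eta i G y) (G p * G (i y))"
    using pp2[OF c] unfolding p_def eta_def by (simp add: mult.assoc)
  have px: "m p (i y) = x" unfolding p_def using g_canc[OF c] by simp
  have ipx: "m (i p) x = i y" using g_canc[of p "i y"] dp px by simp
  have "lam act (G p * G (i p) * G x) (G p * G (m (i p) x))"
    using pp1[of "i p" x] dp by simp
  hence s2: "lam act (eta i G p * G x) (G p * G (i y))" using ipx by (simp add: eta_def)
  show ?thesis using s1 s2 unfolding p_def by (meson lam_trans lam_sym)
qed

lemma nn_comm: assumes r: "rn x = rn y"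
  shows "nn i act G \<sigma> x * nn i act G \<sigma> y = nn i act G \<sigma> y * nn i act G \<sigma> x"
proof -
  obtain \<gamma> where g: "\<gamma> \<noteq> 0" "eta i G x * eta i G y = act \<gamma> (eta i G y * eta i G x)"
    using eta_comm_lam[OF r] unfolding lam_def by blast
  let ?a = "inverse (\<sigma> (i x) x)" and ?b = "inverse (\<sigma> (i y) y)"
  have e1: "nn i act G \<sigma> x * nn i act G \<sigma> y = act (?a * ?b * \<gamma>) (eta i G y * eta i G x)"
    by (simp add: nn_eq a_prod g a_assoc)
  have e2: "nn i act G \<sigma> y * nn i act G \<sigma> x = act (?a * ?b) (eta i G y * eta i G x)"
    by (simp add: nn_eq a_prod mult.commute)
  show ?thesis
  proof (cases "?a * ?b = 0")
    case True
    hence "?a * ?b * \<gamma> = 0" by simp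
    thus ?thesis using e1 e2 True by (simp only: a_zero)
  next
    case False
    hence "nn i act G \<sigma> x * nn i act G \<sigma> y = act \<gamma> (nn i act G \<sigma> y * nn i act G \<sigma> x)"
      using e1 e2 by (simp add: a_assoc mult.commute)
    thus ?thesis using AL nn_idem g(1) by blast
  qed
qed

lemma nn_conj: assumes c: "dm x = rn y"
  shows "G x * nn i act G \<sigma> y = nn i act G \<sigma> (m x y) * G x"
proof -
  obtain \<gamma> where g: "\<gamma> \<noteq> 0" "G x * eta i G y = act \<gamma> (eta i G (m x y) * G x)"
    using eta_conj_lam[OF c] unfolding lam_def by blast
  let ?a = "inverse (\<sigma> (i (m x y)) (m x y))" and ?b = "inverse (\<sigma> (i y) y)"
  have e1: "G x * nn i act G \<sigma> y = act (?b * \<gamma>) (eta i G (m x y) * G x)"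
    by (simp add: nn_eq a_mR[symmetric] g a_assoc)
  have e2: "nn i act G \<sigma> (m x y) * G x = act ?a (eta i G (m x y) * G x)"
    by (simp add: nn_eq a_mL)
  show ?thesis
  proof (cases "?b = 0")
    case True
    hence "G y = 0" using sig_zero[of y] sig_sym[of y] by simp
    hence "eta i G y = 0" by (simp add: eta_zero)
    hence "eta i G (m x y) * G x = 0" using g a_nz by simp
    thus ?thesis using True e1 e2 by (simp add: a_zero a_zero2)
  next
    case bnz: False
    show ?thesis
    proof (cases "?a = 0")
      case True
      hence "G (m x y) = 0" using sig_zero[of "m x y"] sig_sym[of "m x y"] by simp
      hence "eta i G (m x y) = 0" by (simp add: eta_zero)
      thus ?thesis using e1 e2 by (simp add: a_zero2)
    next
      case False
      hence "G x * nn i act G \<sigma> y = act (?b * \<gamma> * inverse ?a) (nn i act G \<sigma> (m x y) * G x)"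
        using e1 e2 by (simp add: a_assoc mult.assoc)
      thus ?thesis using AL[OF nn_idem nn_idem] g(1) bnz False by simp
    qed
  qed
qed


lemma nn_prod_zero: assumes r: "rn x = rn y"
  shows "eta i G y * eta i G x = 0 \<longleftrightarrow> nn i act G \<sigma> x * nn i act G \<sigma> y = 0"
proof (cases "G x = 0 \<or> G y = 0")
  case True
  hence "eta i G x = 0 \<or> eta i G y = 0" by (auto simp: eta_zero)
  moreover have "nn i act G \<sigma> x = 0 \<or> nn i act G \<sigma> y = 0" using True by (auto simp: nn_zero)
  ultimately show ?thesis by auto
next
  case False
  let ?a = "inverse (\<sigma> (i x) x)" and ?b = "inverse (\<sigma> (i y) y)"
  have "?a \<noteq> 0" "?b \<noteq> 0" using False sig_zero sig_sym by auto
  hence nz: "?a * ?b \<noteq> 0" by simp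
  have e: "nn i act G \<sigma> x * nn i act G \<sigma> y = act (?a * ?b) (eta i G x * eta i G y)"
    by (simp add: nn_eq a_prod)
  have "eta i G x * eta i G y = 0 \<longleftrightarrow> eta i G y * eta i G x = 0"
    using lam_zero[OF eta_comm_lam[OF r]] .
  thus ?thesis using e nz a_nz a_zero2 by metis
qed

end

theorem mainTheorem17:
  fixes m :: "'g \<Rightarrow> 'g \<Rightarrow> 'g" and i :: "'g \<Rightarrow> 'g"
    and act :: "'k::field \<Rightarrow> 's::{semigroup_mult,mult_zero} \<Rightarrow> 's"
    and \<Gamma> :: "'g \<Rightarrow> 's" and \<sigma> :: "'g \<Rightarrow> 'g \<Rightarrow> 'k" and x y :: 'g
  assumes "groupoid m i"
    and "K_cancellative act"
    and "partial_proj_rep m i act \<Gamma>"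
    and "factor_set m i act \<Gamma> \<sigma>"
    and "\<And>z. \<Gamma> (gran m i z) * \<Gamma> z = \<Gamma> z"
    and "\<And>z. \<Gamma> z * \<Gamma> (gdom m i z) = \<Gamma> z"
  shows "eta i \<Gamma> x * eta i \<Gamma> x = act (\<sigma> x (i x)) (eta i \<Gamma> x)
    \<and> nn i act \<Gamma> \<sigma> x * nn i act \<Gamma> \<sigma> x = nn i act \<Gamma> \<sigma> x
    \<and> (eta i \<Gamma> x = 0 \<longleftrightarrow> \<sigma> x (i x) = 0)
    \<and> (\<sigma> x (i x) = 0 \<longleftrightarrow> \<Gamma> x = 0)
    \<and> (\<Gamma> x = 0 \<longleftrightarrow> nn i act \<Gamma> \<sigma> x = 0)
    \<and> (gran m i x = gran m i y \<longrightarrow>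
         (eta i \<Gamma> x * eta i \<Gamma> y = 0 \<longleftrightarrow> eta i \<Gamma> y * eta i \<Gamma> x = 0)
       \<and> (eta i \<Gamma> y * eta i \<Gamma> x = 0 \<longleftrightarrow> nn i act \<Gamma> \<sigma> x * nn i act \<Gamma> \<sigma> y = 0))
    \<and> (gdom m i x = gran m i y \<longrightarrow>
         \<Gamma> x * nn i act \<Gamma> \<sigma> y = nn i act \<Gamma> \<sigma> (m x y) * \<Gamma> x)
    \<and> (gran m i x = gran m i y \<longrightarrow>
         nn i act \<Gamma> \<sigma> x * nn i act \<Gamma> \<sigma> y = nn i act \<Gamma> \<sigma> y * nn i act \<Gamma> \<sigma> x)"
proof -
  interpret setting m i act \<Gamma> \<sigma> using assms by unfold_locales
  show ?thesis
    using eta_sq[of x] nn_idem[of x] eta_zero[of x] sig_zero[of x] nn_zero[of x]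
      lam_zero[OF eta_comm_lam[of x y]] nn_prod_zero[of x y] nn_conj[of x y] nn_comm[of x y]
    by (auto simp del: g_dom_inv g_ran_inv)
qed

end
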